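(* Let $k$ be an algebraically closed field with $\operatorname{char}(k)\neq 2$, and let $\alpha\in k$ satisfy $\alpha(1-\alpha^2)\neq 0$. Let $A(\alpha)$ be the $k$-algebra on degree-one generators $x_1,\dots,x_4$ with defining relations \[ x_3x_1+x_1x_3=0,\quad x_3x_2-x_2x_3=0,\quad 2x_2^2+\alpha x_3^2=x_1^2,\quad x_4x_1+x_1x_4=0,\quad x_2^2-x_4^2=0,\quad x_4x_2+x_2x_4=x_3^2 . \] Let $\mathfrak p\subset\mathbb P^3$ be the subscheme defined by the fifteen $4\times 4$ minors of the matrix \[ M=\begin{bmatrix} x_3 & 0 & x_1 & 0\\ 0 & -x_3 & x_2 & 0\\ x_4 & 0 & 0 & x_1\\ -x_1 & 2 x_2 & \alpha x_3 & 0\\ 0 & x_4 & -x_3 & x_2\\ 0 & x_2 & 0 & -x_4 \end{bmatrix}. \] Define the following sets of points $(\lambda_1,\lambda_2,\lambda_3,\lambda_4)\in\mathbb P^3$: $Z_0=\{e_1,e_2,e_3,e_4\}$ (the coordinate points); $Z_1=\{(\lambda_1,1,\lambda_3,1): \lambda_1^2=-2(1+\alpha),\ \lambda_3^2=2\}$; $Z_2=\{(\lambda_1,-1,\lambda_3,1): \lambda_1^2=-2(1-\alpha),\ \lambda_3^2=-2\}$; $Z_3=\{(\lambda_1,\lambda_2,0,1): \lambda_1^2=-2,\ \lambda_2^2=-1\}$; $Z_4=\{(0,\lambda_2,\lambda_3,1): \alpha\lambda_2^2+2\lambda_2+\alpha=0,\ \alpha\lambda_3^2=-2\lambda_2^2\}$.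 Then $\mathfrak p=\bigcup_{i=0}^4 Z_i$, and $\mathfrak p$ consists of exactly twenty distinct points, each of multiplicity one.
   Context: The relations of $A(\alpha)$ can be written as $Mx=0$ with $x=(x_1,\dots,x_4)^T$; $\mathfrak p$ is the projection to the first factor of the zero locus $\Gamma\subset\mathbb P^3\times\mathbb P^3$ of the six defining relations, where a quadratic element $\sum c_{ij}x_ix_j$ is evaluated at $(p,q)$ as $\sum c_{ij}p_iq_j$. *)

theory Defs
  imports "HOL-Computational_Algebra.Polynomial" "HOL-Combinatorics.Permutations"
begin

text \<open>Vectors in k^4 are functions nat => k supported on the indices 1..4
  (coordinates x_1..x_4 as in the paper).\<close>

definition pt :: "'a::zero \<Rightarrow> 'a \<Rightarrow> 'a \<Rightarrow> 'a \<Rightarrow> nat \<Rightarrow> 'a" where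
  "pt a b c d = (\<lambda>i. if i = 1 then a else if i = 2 then b else if i = 3 then c
                       else if i = 4 then d else 0)"

definition vecs4 :: "(nat \<Rightarrow> 'a::zero) set" where
  "vecs4 = {pt a b c d | a b c d. True}"

definition proj :: "(nat \<Rightarrow> 'a::field) \<Rightarrow> (nat \<Rightarrow> 'a) set" where
  "proj p = {(\<lambda>i. c * p i) | c. c \<noteq> 0}"

definition Mmat :: "'a::comm_ring_1 \<Rightarrow> (nat \<Rightarrow> 'a) \<Rightarrow> nat \<Rightarrow> nat \<Rightarrow> 'a" where
  "Mmat \<alpha> x i j =
    (if i = 1 then [x 3, 0, x 1, 0] ! (j - 1)
     else if i = 2 then [0, - x 3, x 2, 0] ! (j - 1)
     else if i = 3 then [x 4, 0, 0, x 1] ! (j - 1)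
     else if i = 4 then [- x 1, 2 * x 2, \<alpha> * x 3, 0] ! (j - 1)
     else if i = 5 then [0, x 4, - x 3, x 2] ! (j - 1)
     else [0, x 2, 0, - x 4] ! (j - 1))"

definition det4 :: "(nat \<Rightarrow> nat \<Rightarrow> 'a::comm_ring_1) \<Rightarrow> 'a" where
  "det4 A = (\<Sum>\<sigma> | \<sigma> permutes {0..<4}. of_int (sign \<sigma>) * (\<Prod>i<4. A i (\<sigma> i)))"

definition minor4 :: "'a::comm_ring_1 \<Rightarrow> (nat \<Rightarrow> 'a) \<Rightarrow> nat set \<Rightarrow> 'a" where
  "minor4 \<alpha> x R = det4 (\<lambda>i j. Mmat \<alpha> x (sorted_list_of_set R ! i) (j + 1))"

definition row_sets :: "nat set set" where
  "row_sets = {R. R \<subseteq> {1..6} \<and> card R = 4}"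

text \<open>Nonzero vectors of the affine cone over the subscheme defined by the 15 minors.\<close>
definition plocus :: "'a::field \<Rightarrow> (nat \<Rightarrow> 'a) set" where
  "plocus \<alpha> = {p \<in> vecs4. (\<exists>i\<in>{1..4}. p i \<noteq> 0) \<and> (\<forall>R \<in> row_sets. minor4 \<alpha> p R = 0)}"

text \<open>Directional derivative D_v of the minor polynomial at p: coefficient of t in
  minor(p + t v).\<close>
definition dminor :: "'a::field \<Rightarrow> (nat \<Rightarrow> 'a) \<Rightarrow> (nat \<Rightarrow> 'a) \<Rightarrow> nat set \<Rightarrow> 'a" where
  "dminor \<alpha> p v R = coeff (minor4 [:\<alpha>:] (\<lambda>i. [:p i, v i:]) R) 1"

text \<open>Multiplicity one at the point [p]: the Zariski tangent space of the affine cone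
  at p (kernel of the Jacobian of the minors) is just the line spanned by p, i.e. the
  tangent space of the subscheme at [p] is zero.\<close>
definition mult_one :: "'a::field \<Rightarrow> (nat \<Rightarrow> 'a) \<Rightarrow> bool" where
  "mult_one \<alpha> p \<longleftrightarrow>
     (\<forall>v \<in> vecs4. (\<forall>R \<in> row_sets. dminor \<alpha> p v R = 0) \<longrightarrow> (\<exists>c. v = (\<lambda>i. c * p i)))"

definition Z0 :: "(nat \<Rightarrow> 'a::field) set" where
  "Z0 = {pt 1 0 0 0, pt 0 1 0 0, pt 0 0 1 0, pt 0 0 0 1}"

definition Z1 :: "'a::field \<Rightarrow> (nat \<Rightarrow> 'a) set" where
  "Z1 \<alpha> = {pt l1 1 l3 1 | l1 l3. l1^2 = - 2 * (1 + \<alpha>) \<and> l3^2 = 2}"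

definition Z2 :: "'a::field \<Rightarrow> (nat \<Rightarrow> 'a) set" where
  "Z2 \<alpha> = {pt l1 (-1) l3 1 | l1 l3. l1^2 = - 2 * (1 - \<alpha>) \<and> l3^2 = - 2}"

definition Z3 :: "(nat \<Rightarrow> 'a::field) set" where
  "Z3 = {pt l1 l2 0 1 | l1 l2. l1^2 = - 2 \<and> l2^2 = - 1}"

definition Z4 :: "'a::field \<Rightarrow> (nat \<Rightarrow> 'a) set" where
  "Z4 \<alpha> = {pt 0 l2 l3 1 | l2 l3. \<alpha> * l2^2 + 2 * l2 + \<alpha> = 0 \<and> \<alpha> * l3^2 = - 2 * l2^2}"

end

theory Submission
  imports Defs
begin


lemma perm_tc: "permutation q \<Longrightarrow> permutation (transpose a b \<circ> q)"
  by (simp add: permutation_compose permutation_swap_id)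
lemma sgn_tc: "permutation q \<Longrightarrow> sign (transpose a b \<circ> q) = (if a = b then 1 else -1) * sign q"
  by (simp add: sign_compose permutation_swap_id sign_swap_id)

lemma det4_explicit:
  fixes A :: "nat \<Rightarrow> nat \<Rightarrow> 'a::comm_ring_1"
  shows "det4 A = 
   A 0 0 * A 1 1 * A 2 2 * A 3 3 - A 0 0 * A 1 1 * A 2 3 * A 3 2
 - A 0 0 * A 1 2 * A 2 1 * A 3 3 + A 0 0 * A 1 2 * A 2 3 * A 3 1
 + A 0 0 * A 1 3 * A 2 1 * A 3 2 - A 0 0 * A 1 3 * A 2 2 * A 3 1
 - A 0 1 * A 1 0 * A 2 2 * A 3 3 + A 0 1 * A 1 0 * A 2 3 * A 3 2
 + A 0 1 * A 1 2 * A 2 0 * A 3 3 - A 0 1 * A 1 2 * A 2 3 * A 3 0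
 - A 0 1 * A 1 3 * A 2 0 * A 3 2 + A 0 1 * A 1 3 * A 2 2 * A 3 0
 + A 0 2 * A 1 0 * A 2 1 * A 3 3 - A 0 2 * A 1 0 * A 2 3 * A 3 1
 - A 0 2 * A 1 1 * A 2 0 * A 3 3 + A 0 2 * A 1 1 * A 2 3 * A 3 0
 + A 0 2 * A 1 3 * A 2 0 * A 3 1 - A 0 2 * A 1 3 * A 2 1 * A 3 0
 - A 0 3 * A 1 0 * A 2 1 * A 3 2 + A 0 3 * A 1 0 * A 2 2 * A 3 1
 + A 0 3 * A 1 1 * A 2 0 * A 3 2 - A 0 3 * A 1 1 * A 2 2 * A 3 0
 - A 0 3 * A 1 2 * A 2 0 * A 3 1 + A 0 3 * A 1 2 * A 2 1 * A 3 0"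
proof -
  have e: "{0..<4::nat} = insert 0 (insert 1 (insert 2 (insert 3 {})))" by auto
  have pe: "{p. p permutes {}} = {id}" by auto
  have s: "sum f {p. p permutes {0..<4::nat}} =
     (\<Sum>b\<in>{0,1,2,3}. \<Sum>c\<in>{1,2,3}. \<Sum>d\<in>{2,3}. f (transpose 0 b \<circ> (transpose 1 c \<circ> (transpose 2 d \<circ> (transpose 3 3 \<circ> id)))))" for f :: "(nat \<Rightarrow> nat) \<Rightarrow> 'a"
    unfolding e by (simp add: sum_over_permutations_insert pe)
  have p4: "(\<Prod>i<4. g i) = g 0 * g 1 * g 2 * (g 3::'a)" for g :: "nat \<Rightarrow> 'a"
    by (simp add: numeral_eq_Suc lessThan_Suc mult.commute mult.left_commute)
  show ?thesis
    unfolding det4_def s p4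
    by (simp add: sgn_tc perm_tc sign_swap_id permutation_swap_id lessThan_Suc_eq_insert_0 transpose_def algebra_simps)
qed

lemma sl4: "sorted_list_of_set {a,b,c,d::nat} = [a,b,c,d]" if "a<b" "b<c" "c<d"
  using that by (intro sorted_list_of_set_unique[THEN iffD1]) auto

lemma m1: "minor4 \<alpha> x {1,2,3,4} = \<alpha> * x 1 * (x 3)^3 + (x 1)^3 * x 3 + 2 * x 1 * (x 2)^2 * x 3"
  by (simp add: minor4_def sl4 det4_explicit Mmat_def algebra_simps power2_eq_square power3_eq_cube)

lemma m2: "minor4 \<alpha> x {1,2,3,5} = 2 * x 1 * x 2 * x 3 * x 4 - x 1 * (x 3)^3"
  by (simp add: minor4_def sl4 det4_explicit Mmat_def algebra_simps power2_eq_square power3_eq_cube)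

lemma m3: "minor4 \<alpha> x {1,2,3,6} = x 1 * (x 2)^2 * x 3 - x 1 * x 3 * (x 4)^2"
  by (simp add: minor4_def sl4 det4_explicit Mmat_def algebra_simps power2_eq_square power3_eq_cube)

lemma m4: "minor4 \<alpha> x {1,2,4,5} = - (\<alpha> * x 2 * (x 3)^3) - (x 1)^2 * x 2 * x 3 - 2 * (x 2)^3 * x 3"
  by (simp add: minor4_def sl4 det4_explicit Mmat_def algebra_simps power2_eq_square power3_eq_cube)

lemma m5: "minor4 \<alpha> x {1,2,4,6} = \<alpha> * (x 3)^3 * x 4 + (x 1)^2 * x 3 * x 4 + 2 * (x 2)^2 * x 3 * x 4"
  by (simp add: minor4_def sl4 det4_explicit Mmat_def algebra_simps power2_eq_square power3_eq_cube)

lemma m6: "minor4 \<alpha> x {1,2,5,6} = (x 2)^3 * x 3 + x 2 * x 3 * (x 4)^2 - (x 3)^3 * x 4"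
  by (simp add: minor4_def sl4 det4_explicit Mmat_def algebra_simps power2_eq_square power3_eq_cube)

lemma m7: "minor4 \<alpha> x {1,3,4,5} = - (\<alpha> * x 1 * (x 3)^2 * x 4) - (x 1)^3 * x 4 + 2 * x 1 * (x 2)^2 * x 4 - 2 * x 1 * x 2 * (x 3)^2"
  by (simp add: minor4_def sl4 det4_explicit Mmat_def algebra_simps power2_eq_square power3_eq_cube)

lemma m8: "minor4 \<alpha> x {1,3,4,6} = - (\<alpha> * x 1 * x 2 * (x 3)^2) - (x 1)^3 * x 2 - 2 * x 1 * x 2 * (x 4)^2"
  by (simp add: minor4_def sl4 det4_explicit Mmat_def algebra_simps power2_eq_square power3_eq_cube)

lemma m9: "minor4 \<alpha> x {1,3,5,6} = - (x 1 * (x 2)^2 * x 4) + x 1 * x 2 * (x 3)^2 - x 1 * (x 4)^3"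
  by (simp add: minor4_def sl4 det4_explicit Mmat_def algebra_simps power2_eq_square power3_eq_cube)

lemma m10: "minor4 \<alpha> x {1,4,5,6} = \<alpha> * (x 2)^2 * (x 3)^2 + \<alpha> * (x 3)^2 * (x 4)^2 + (x 1)^2 * (x 2)^2 + (x 1)^2 * (x 4)^2 + 2 * x 2 * (x 3)^2 * x 4"
  by (simp add: minor4_def sl4 det4_explicit Mmat_def algebra_simps power2_eq_square power3_eq_cube)

lemma m11: "minor4 \<alpha> x {2,3,4,5} = \<alpha> * x 2 * (x 3)^2 * x 4 - (x 1)^2 * x 2 * x 4 + (x 1)^2 * (x 3)^2 + 2 * (x 2)^3 * x 4"
  by (simp add: minor4_def sl4 det4_explicit Mmat_def algebra_simps power2_eq_square power3_eq_cube)

lemma m12: "minor4 \<alpha> x {2,3,4,6} = - (\<alpha> * (x 3)^2 * (x 4)^2) - (x 1)^2 * (x 2)^2 - 2 * (x 2)^2 * (x 4)^2"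
  by (simp add: minor4_def sl4 det4_explicit Mmat_def algebra_simps power2_eq_square power3_eq_cube)

lemma m13: "minor4 \<alpha> x {2,3,5,6} = - ((x 2)^3 * x 4) - x 2 * (x 4)^3 + (x 3)^2 * (x 4)^2"
  by (simp add: minor4_def sl4 det4_explicit Mmat_def algebra_simps power2_eq_square power3_eq_cube)

lemma m14: "minor4 \<alpha> x {2,4,5,6} = x 1 * (x 2)^3 + x 1 * x 2 * (x 4)^2 - x 1 * (x 3)^2 * x 4"
  by (simp add: minor4_def sl4 det4_explicit Mmat_def algebra_simps power2_eq_square power3_eq_cube)

lemma m15: "minor4 \<alpha> x {3,4,5,6} = \<alpha> * (x 2)^2 * x 3 * x 4 + \<alpha> * x 3 * (x 4)^3 + (x 1)^2 * x 2 * x 3 + 2 * x 2 * x 3 * (x 4)^2"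
  by (simp add: minor4_def sl4 det4_explicit Mmat_def algebra_simps power2_eq_square power3_eq_cube)

lemma coeff_mult_1: "coeff (p * q) 1 = coeff p 0 * coeff q 1 + coeff p 1 * coeff q (0::nat)"
  by (simp add: coeff_mult atMost_Suc add.commute)

lemma coeff_num0: "coeff (numeral n :: 'a::comm_ring_1 poly) 0 = numeral n"
  by (simp add: numeral_poly)
lemma coeff_num1: "coeff (numeral n :: 'a::comm_ring_1 poly) (Suc 0) = 0"
  by (simp add: numeral_poly)


lemma d1: "dminor \<alpha> p v {1,2,3,4} = 3 * \<alpha> * p 1 * (p 3)^2 * v 3 + \<alpha> * (p 3)^3 * v 1 + (p 1)^3 * v 3 + 3 * (p 1)^2 * p 3 * v 1 + 2 * p 1 * (p 2)^2 * v 3 + 4 * p 1 * p 2 * p 3 * v 2 + 2 * (p 2)^2 * p 3 * v 1"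
  unfolding dminor_def m1 by (simp add: coeff_mult_1 coeff_num0 coeff_num1 power2_eq_square power3_eq_cube algebra_simps)

lemma d2: "dminor \<alpha> p v {1,2,3,5} = 2 * p 1 * p 2 * p 3 * v 4 + 2 * p 1 * p 2 * p 4 * v 3 - 3 * p 1 * (p 3)^2 * v 3 + 2 * p 1 * p 3 * p 4 * v 2 + 2 * p 2 * p 3 * p 4 * v 1 - (p 3)^3 * v 1"
  unfolding dminor_def m2 by (simp add: coeff_mult_1 coeff_num0 coeff_num1 power2_eq_square power3_eq_cube algebra_simps)

lemma d3: "dminor \<alpha> p v {1,2,3,6} = p 1 * (p 2)^2 * v 3 + 2 * p 1 * p 2 * p 3 * v 2 - 2 * p 1 * p 3 * p 4 * v 4 - p 1 * (p 4)^2 * v 3 + (p 2)^2 * p 3 * v 1 - p 3 * (p 4)^2 * v 1"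
  unfolding dminor_def m3 by (simp add: coeff_mult_1 coeff_num0 coeff_num1 power2_eq_square power3_eq_cube algebra_simps)

lemma d4: "dminor \<alpha> p v {1,2,4,5} = - (3 * \<alpha> * p 2 * (p 3)^2 * v 3) - \<alpha> * (p 3)^3 * v 2 - (p 1)^2 * p 2 * v 3 - (p 1)^2 * p 3 * v 2 - 2 * p 1 * p 2 * p 3 * v 1 - 2 * (p 2)^3 * v 3 - 6 * (p 2)^2 * p 3 * v 2"
  unfolding dminor_def m4 by (simp add: coeff_mult_1 coeff_num0 coeff_num1 power2_eq_square power3_eq_cube algebra_simps)

lemma d5: "dminor \<alpha> p v {1,2,4,6} = \<alpha> * (p 3)^3 * v 4 + 3 * \<alpha> * (p 3)^2 * p 4 * v 3 + (p 1)^2 * p 3 * v 4 + (p 1)^2 * p 4 * v 3 + 2 * p 1 * p 3 * p 4 * v 1 + 2 * (p 2)^2 * p 3 * v 4 + 2 * (p 2)^2 * p 4 * v 3 + 4 * p 2 * p 3 * p 4 * v 2"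
  unfolding dminor_def m5 by (simp add: coeff_mult_1 coeff_num0 coeff_num1 power2_eq_square power3_eq_cube algebra_simps)

lemma d6: "dminor \<alpha> p v {1,2,5,6} = (p 2)^3 * v 3 + 3 * (p 2)^2 * p 3 * v 2 + 2 * p 2 * p 3 * p 4 * v 4 + p 2 * (p 4)^2 * v 3 - (p 3)^3 * v 4 - 3 * (p 3)^2 * p 4 * v 3 + p 3 * (p 4)^2 * v 2"
  unfolding dminor_def m6 by (simp add: coeff_mult_1 coeff_num0 coeff_num1 power2_eq_square power3_eq_cube algebra_simps)

lemma d7: "dminor \<alpha> p v {1,3,4,5} = - (\<alpha> * p 1 * (p 3)^2 * v 4) - 2 * \<alpha> * p 1 * p 3 * p 4 * v 3 - \<alpha> * (p 3)^2 * p 4 * v 1 - (p 1)^3 * v 4 - 3 * (p 1)^2 * p 4 * v 1 + 2 * p 1 * (p 2)^2 * v 4 - 4 * p 1 * p 2 * p 3 * v 3 + 4 * p 1 * p 2 * p 4 * v 2 - 2 * p 1 * (p 3)^2 * v 2 + 2 * (p 2)^2 * p 4 * v 1 - 2 * p 2 * (p 3)^2 * v 1"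
  unfolding dminor_def m7 by (simp add: coeff_mult_1 coeff_num0 coeff_num1 power2_eq_square power3_eq_cube algebra_simps)

lemma d8: "dminor \<alpha> p v {1,3,4,6} = - (2 * \<alpha> * p 1 * p 2 * p 3 * v 3) - \<alpha> * p 1 * (p 3)^2 * v 2 - \<alpha> * p 2 * (p 3)^2 * v 1 - (p 1)^3 * v 2 - 3 * (p 1)^2 * p 2 * v 1 - 4 * p 1 * p 2 * p 4 * v 4 - 2 * p 1 * (p 4)^2 * v 2 - 2 * p 2 * (p 4)^2 * v 1"
  unfolding dminor_def m8 by (simp add: coeff_mult_1 coeff_num0 coeff_num1 power2_eq_square power3_eq_cube algebra_simps)

lemma d9: "dminor \<alpha> p v {1,3,5,6} = - (p 1 * (p 2)^2 * v 4) + 2 * p 1 * p 2 * p 3 * v 3 - 2 * p 1 * p 2 * p 4 * v 2 + p 1 * (p 3)^2 * v 2 - 3 * p 1 * (p 4)^2 * v 4 - (p 2)^2 * p 4 * v 1 + p 2 * (p 3)^2 * v 1 - (p 4)^3 * v 1"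
  unfolding dminor_def m9 by (simp add: coeff_mult_1 coeff_num0 coeff_num1 power2_eq_square power3_eq_cube algebra_simps)

lemma d10: "dminor \<alpha> p v {1,4,5,6} = 2 * \<alpha> * (p 2)^2 * p 3 * v 3 + 2 * \<alpha> * p 2 * (p 3)^2 * v 2 + 2 * \<alpha> * (p 3)^2 * p 4 * v 4 + 2 * \<alpha> * p 3 * (p 4)^2 * v 3 + 2 * (p 1)^2 * p 2 * v 2 + 2 * (p 1)^2 * p 4 * v 4 + 2 * p 1 * (p 2)^2 * v 1 + 2 * p 1 * (p 4)^2 * v 1 + 2 * p 2 * (p 3)^2 * v 4 + 4 * p 2 * p 3 * p 4 * v 3 + 2 * (p 3)^2 * p 4 * v 2"
  unfolding dminor_def m10 by (simp add: coeff_mult_1 coeff_num0 coeff_num1 power2_eq_square power3_eq_cube algebra_simps)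

lemma d11: "dminor \<alpha> p v {2,3,4,5} = \<alpha> * p 2 * (p 3)^2 * v 4 + 2 * \<alpha> * p 2 * p 3 * p 4 * v 3 + \<alpha> * (p 3)^2 * p 4 * v 2 - (p 1)^2 * p 2 * v 4 + 2 * (p 1)^2 * p 3 * v 3 - (p 1)^2 * p 4 * v 2 - 2 * p 1 * p 2 * p 4 * v 1 + 2 * p 1 * (p 3)^2 * v 1 + 2 * (p 2)^3 * v 4 + 6 * (p 2)^2 * p 4 * v 2"
  unfolding dminor_def m11 by (simp add: coeff_mult_1 coeff_num0 coeff_num1 power2_eq_square power3_eq_cube algebra_simps)

lemma d12: "dminor \<alpha> p v {2,3,4,6} = - (2 * \<alpha> * (p 3)^2 * p 4 * v 4) - 2 * \<alpha> * p 3 * (p 4)^2 * v 3 - 2 * (p 1)^2 * p 2 * v 2 - 2 * p 1 * (p 2)^2 * v 1 - 4 * (p 2)^2 * p 4 * v 4 - 4 * p 2 * (p 4)^2 * v 2"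
  unfolding dminor_def m12 by (simp add: coeff_mult_1 coeff_num0 coeff_num1 power2_eq_square power3_eq_cube algebra_simps)

lemma d13: "dminor \<alpha> p v {2,3,5,6} = - ((p 2)^3 * v 4) - 3 * (p 2)^2 * p 4 * v 2 - 3 * p 2 * (p 4)^2 * v 4 + 2 * (p 3)^2 * p 4 * v 4 + 2 * p 3 * (p 4)^2 * v 3 - (p 4)^3 * v 2"
  unfolding dminor_def m13 by (simp add: coeff_mult_1 coeff_num0 coeff_num1 power2_eq_square power3_eq_cube algebra_simps)

lemma d14: "dminor \<alpha> p v {2,4,5,6} = 3 * p 1 * (p 2)^2 * v 2 + 2 * p 1 * p 2 * p 4 * v 4 - p 1 * (p 3)^2 * v 4 - 2 * p 1 * p 3 * p 4 * v 3 + p 1 * (p 4)^2 * v 2 + (p 2)^3 * v 1 + p 2 * (p 4)^2 * v 1 - (p 3)^2 * p 4 * v 1"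
  unfolding dminor_def m14 by (simp add: coeff_mult_1 coeff_num0 coeff_num1 power2_eq_square power3_eq_cube algebra_simps)

lemma d15: "dminor \<alpha> p v {3,4,5,6} = \<alpha> * (p 2)^2 * p 3 * v 4 + \<alpha> * (p 2)^2 * p 4 * v 3 + 2 * \<alpha> * p 2 * p 3 * p 4 * v 2 + 3 * \<alpha> * p 3 * (p 4)^2 * v 4 + \<alpha> * (p 4)^3 * v 3 + (p 1)^2 * p 2 * v 3 + (p 1)^2 * p 3 * v 2 + 2 * p 1 * p 2 * p 3 * v 1 + 4 * p 2 * p 3 * p 4 * v 4 + 2 * p 2 * (p 4)^2 * v 3 + 2 * p 3 * (p 4)^2 * v 2"
  unfolding dminor_def m15 by (simp add: coeff_mult_1 coeff_num0 coeff_num1 power2_eq_square power3_eq_cube algebra_simps)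

definition "RS = {{1,2,3,4},{1,2,3,5},{1,2,3,6},{1,2,4,5},{1,2,4,6},{1,2,5,6},{1,3,4,5},{1,3,4,6},{1,3,5,6},{1,4,5,6},{2,3,4,5},{2,3,4,6},{2,3,5,6},{2,4,5,6},{3,4,5,6::nat}}"
lemma row_sets_eq: "row_sets = RS"
proof -
  have "{1..6::nat} = {1,2,3,4,5,6}" by auto
  then have e: "row_sets = {R \<in> Pow {1,2,3,4,5,6}. card R = 4}" unfolding row_sets_def by auto
  have "R \<in> RS" if "R \<in> Pow {1,2,3,4,5,6}" "card R = 4" for R
    using that unfolding Pow_insert
    apply (simp add: image_insert insert_commute)
    apply (elim disjE)
    by (simp_all add: RS_def card_insert_if insert_commute)
  moreover have "RS \<subseteq> {R \<in> Pow {1,2,3,4,5,6}. card R = 4}"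
    unfolding RS_def by simp
  ultimately show ?thesis unfolding e by blast
qed

definition Eqs :: "'a::field \<Rightarrow> 'a \<Rightarrow> 'a \<Rightarrow> 'a \<Rightarrow> 'a \<Rightarrow> bool" where
  "Eqs \<alpha> a b c d \<longleftrightarrow>
    (\<alpha> * a * c^3 + a^3 * c + 2 * a * b^2 * c) = 0 \<and>
    (2 * a * b * c * d - a * c^3) = 0 \<and>
    (a * b^2 * c - a * c * d^2) = 0 \<and>
    (- (\<alpha> * b * c^3) - a^2 * b * c - 2 * b^3 * c) = 0 \<and>
    (\<alpha> * c^3 * d + a^2 * c * d + 2 * b^2 * c * d) = 0 \<and>
    (b^3 * c + b * c * d^2 - c^3 * d) = 0 \<and>
    (- (\<alpha> * a * c^2 * d) - a^3 * d + 2 * a * b^2 * d - 2 * a * b * c^2) = 0 \<and>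
    (- (\<alpha> * a * b * c^2) - a^3 * b - 2 * a * b * d^2) = 0 \<and>
    (- (a * b^2 * d) + a * b * c^2 - a * d^3) = 0 \<and>
    (\<alpha> * b^2 * c^2 + \<alpha> * c^2 * d^2 + a^2 * b^2 + a^2 * d^2 + 2 * b * c^2 * d) = 0 \<and>
    (\<alpha> * b * c^2 * d - a^2 * b * d + a^2 * c^2 + 2 * b^3 * d) = 0 \<and>
    (- (\<alpha> * c^2 * d^2) - a^2 * b^2 - 2 * b^2 * d^2) = 0 \<and>
    (- (b^3 * d) - b * d^3 + c^2 * d^2) = 0 \<and>
    (a * b^3 + a * b * d^2 - a * c^2 * d) = 0 \<and>
    (\<alpha> * b^2 * c * d + \<alpha> * c * d^3 + a^2 * b * c + 2 * b * c * d^2) = 0"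

lemma ball_ins: "(\<forall>x\<in>insert a B. P x) = (P a \<and> (\<forall>x\<in>B. P x))" by simp
lemma ball_emp: "(\<forall>x\<in>{}. P x) = True" by simp

lemma locus_pt: "pt a b c d \<in> plocus \<alpha> \<longleftrightarrow> (a \<noteq> 0 \<or> b \<noteq> 0 \<or> c \<noteq> 0 \<or> d \<noteq> 0) \<and> Eqs \<alpha> a b c d"
proof -
  have v: "pt a b c d \<in> vecs4" by (auto simp: vecs4_def)
  have e4: "{1..4::nat} = {1,2,3,4}" by auto
  have nz: "(\<exists>i\<in>{1..4}. pt a b c d i \<noteq> 0) \<longleftrightarrow> (a \<noteq> 0 \<or> b \<noteq> 0 \<or> c \<noteq> 0 \<or> d \<noteq> 0)"
    unfolding e4 by (simp add: pt_def)
  have mz: "(\<forall>R\<in>row_sets. minor4 \<alpha> (pt a b c d) R = 0) \<longleftrightarrow> Eqs \<alpha> a b c d"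
    unfolding row_sets_eq RS_def Eqs_def ball_ins ball_emp m1 m2 m3 m4 m5 m6 m7 m8 m9 m10 m11 m12 m13 m14 m15
    by (simp add: pt_def)
  show ?thesis unfolding plocus_def using v nz mz by blast
qed



lemma Z1_eqs: "(a::'a::field)^2 = -2*(1+\<alpha>) \<Longrightarrow> c^2 = 2 \<Longrightarrow> b = 1 \<Longrightarrow> d = 1 \<Longrightarrow> Eqs \<alpha> a b c d"
  unfolding Eqs_def by (intro conjI; algebra)
lemma Z2_eqs: "(a::'a::field)^2 = -2*(1-\<alpha>) \<Longrightarrow> c^2 = -2 \<Longrightarrow> b = -1 \<Longrightarrow> d = 1 \<Longrightarrow> Eqs \<alpha> a b c d"
  unfolding Eqs_def by (intro conjI; algebra)
lemma Z3_eqs: "(a::'a::field)^2 = -2 \<Longrightarrow> b^2 = -1 \<Longrightarrow> c = 0 \<Longrightarrow> d = 1 \<Longrightarrow> Eqs \<alpha> a b c d"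
  unfolding Eqs_def by (intro conjI; algebra)
lemma Z4_eqs: "(\<alpha>::'a::field) \<noteq> 0 \<Longrightarrow> \<alpha> * b^2 + 2 * b + \<alpha> = 0 \<Longrightarrow> \<alpha> * c^2 = - 2 * b^2 \<Longrightarrow> a = 0 \<Longrightarrow> d = 1 \<Longrightarrow> Eqs \<alpha> a b c d"
  unfolding Eqs_def by (intro conjI; algebra)

lemma Z0_locus: "p \<in> Z0 \<Longrightarrow> p \<in> plocus \<alpha>"
  unfolding Z0_def by (auto simp: locus_pt Eqs_def)

lemma Zall_locus: assumes "(\<alpha>::'a::field) \<noteq> 0" "p \<in> Z0 \<union> Z1 \<alpha> \<union> Z2 \<alpha> \<union> Z3 \<union> Z4 \<alpha>" shows "p \<in> plocus \<alpha>"
proof -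
  from assms(2) consider "p \<in> Z0" | "p \<in> Z1 \<alpha>" | "p \<in> Z2 \<alpha>" | "p \<in> Z3" | "p \<in> Z4 \<alpha>" by blast
  then show ?thesis
  proof cases
    case 1 then show ?thesis by (rule Z0_locus)
  next
    case 2
    then obtain l1 l3 where p: "p = pt l1 1 l3 1" and h: "l1^2 = - 2 * (1 + \<alpha>)" "l3^2 = 2"
      unfolding Z1_def by blast
    show ?thesis unfolding p locus_pt using Z1_eqs[OF h refl refl] by simp
  next
    case 3
    then obtain l1 l3 where p: "p = pt l1 (-1) l3 1" and h: "l1^2 = - 2 * (1 - \<alpha>)" "l3^2 = - 2"
      unfolding Z2_def by blast
    show ?thesis unfolding p locus_pt using Z2_eqs[OF h refl refl] by simp
  next
    case 4
    then obtain l1 l2 where p: "p = pt l1 l2 0 1" and h: "l1^2 = - 2" "l2^2 = - 1"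
      unfolding Z3_def by blast
    show ?thesis unfolding p locus_pt using Z3_eqs[OF h refl refl] by simp
  next
    case 5
    then obtain l2 l3 where p: "p = pt 0 l2 l3 1" and h: "\<alpha> * l2^2 + 2 * l2 + \<alpha> = 0" "\<alpha> * l3^2 = - 2 * l2^2"
      unfolding Z4_def by blast
    show ?thesis unfolding p locus_pt using Z4_eqs[OF assms(1) h refl refl] by simp
  qed
qed



lemma EqsD: assumes "Eqs \<alpha> a b c d"
  shows "(\<alpha> * a * c^3 + a^3 * c + 2 * a * b^2 * c) = 0"
    "(2 * a * b * c * d - a * c^3) = 0"
    "(a * b^2 * c - a * c * d^2) = 0"
    "(- (\<alpha> * b * c^3) - a^2 * b * c - 2 * b^3 * c) = 0"
    "(\<alpha> * c^3 * d + a^2 * c * d + 2 * b^2 * c * d) = 0"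
    "(b^3 * c + b * c * d^2 - c^3 * d) = 0"
    "(- (\<alpha> * a * c^2 * d) - a^3 * d + 2 * a * b^2 * d - 2 * a * b * c^2) = 0"
    "(- (\<alpha> * a * b * c^2) - a^3 * b - 2 * a * b * d^2) = 0"
    "(- (a * b^2 * d) + a * b * c^2 - a * d^3) = 0"
    "(\<alpha> * b^2 * c^2 + \<alpha> * c^2 * d^2 + a^2 * b^2 + a^2 * d^2 + 2 * b * c^2 * d) = 0"
    "(\<alpha> * b * c^2 * d - a^2 * b * d + a^2 * c^2 + 2 * b^3 * d) = 0"
    "(- (\<alpha> * c^2 * d^2) - a^2 * b^2 - 2 * b^2 * d^2) = 0"
    "(- (b^3 * d) - b * d^3 + c^2 * d^2) = 0"
    "(a * b^3 + a * b * d^2 - a * c^2 * d) = 0"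
    "(\<alpha> * b^2 * c * d + \<alpha> * c * d^3 + a^2 * b * c + 2 * b * c * d^2) = 0"
  using assms unfolding Eqs_def by blast+

lemma Eqs_scale: "Eqs \<alpha> a b c d \<Longrightarrow> Eqs \<alpha> (k*a) (k*b) (k*c) (k*d)"
  unfolding Eqs_def by (elim conjE; intro conjI; algebra)

lemma class0: assumes "Eqs \<alpha> a b c d" "(\<alpha>::'a::field) \<noteq> 0" "d = 0"
  shows "(b=0 \<and> c=0) \<or> (a=0 \<and> c=0) \<or> (a=0 \<and> b=0)"
proof -
  note E = EqsD[OF assms(1)]
  have f2: "a * c^3 = 0" using E assms(3) by algebra
  have f10: "b^2 * (\<alpha> * c^2 + a^2) = 0" using E assms(3) by algebra
  show ?thesis using f2 f10 assms(2) by auto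
qed

lemma class1: assumes "Eqs (\<alpha>::'a) a b c d" "(2::'a::field) \<noteq> 0" "d = 1"
  shows "pt a b c d \<in> Z0 \<union> Z1 \<alpha> \<union> Z2 \<alpha> \<union> Z3 \<union> Z4 \<alpha>"
proof -
  note E = EqsD[OF assms(1)]
  have f1: "a*c*(\<alpha>*c^2 + a^2 + 2*b^2) = 0" using E assms(3) by algebra
  have f2: "a*c*(2*b - c^2) = 0" using E assms(3) by algebra
  have f3: "a*c*(b^2 - 1) = 0" using E assms(3) by algebra
  have f5: "c*(\<alpha>*c^2 + a^2 + 2*b^2) = 0" using E assms(3) by algebra
  have f10: "\<alpha>*c^2*(b^2+1) + a^2*(b^2+1) + 2*b*c^2 = 0" using E assms(3) by algebra
  have f7: "a*(2*b^2 - a^2) = a*c^2*(\<alpha> + 2*b)" using E assms(3) by algebra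
  have f11: "2*b^3 = a^2*b - \<alpha>*b*c^2 - a^2*c^2" using E assms(3) by algebra
  show ?thesis
  proof (cases "c = 0")
    case False
    show ?thesis
    proof (cases "a = 0")
      case False
      with \<open>c \<noteq> 0\<close> f1 f2 f3 have g1: "\<alpha>*c^2 + a^2 + 2*b^2 = 0" and g2: "c^2 = 2*b" and g3: "b^2 = 1"
        by auto
      from g3 have "b = 1 \<or> b = -1" by (simp add: power2_eq_1_iff)
      then show ?thesis
      proof
        assume b: "b = 1"
        have "a^2 = -2*(1+\<alpha>)" "c^2 = 2" using g1 g2 b by algebra+
        then have "pt a b c d \<in> Z1 \<alpha>" unfolding Z1_def b assms(3) by blast
        then show ?thesis by blast
      next
        assume b: "b = -1"
        have "a^2 = -2*(1-\<alpha>)" "c^2 = -2" using g1 g2 b by algebra+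
        then have "pt a b c d \<in> Z2 \<alpha>" unfolding Z2_def b assms(3) by blast
        then show ?thesis by blast
      qed
    next
      case True
      with \<open>c \<noteq> 0\<close> f5 have g1: "\<alpha>*c^2 + 2*b^2 = 0" by auto
      from True f10 have "c^2 * (\<alpha>*b^2 + 2*b + \<alpha>) = 0" by algebra
      with \<open>c \<noteq> 0\<close> have g2: "\<alpha>*b^2 + 2*b + \<alpha> = 0" by auto
      have g3: "\<alpha> * c^2 = - 2 * b^2" using g1 by algebra
      have "pt a b c d \<in> Z4 \<alpha>" unfolding Z4_def True assms(3) using g2 g3 by blast
      then show ?thesis by blast
    qed
  next
    case True
    show ?thesis
    proof (cases "a = 0")
      case False
      from True f10 have "a^2*(b^2+1) = 0" by algebra
      with False have "b^2+1 = 0" by simp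
      then have g1: "b^2 = -1" by algebra
      from f7 True False have "2*b^2 - a^2 = 0" by simp
      with g1 have g2: "a^2 = -2" by algebra
      have "pt a b c d \<in> Z3" unfolding Z3_def True assms(3) using g1 g2 by blast
      then show ?thesis by blast
    next
      case a: True
      from f11 True a assms(2) have "b = 0" by simp
      then have "pt a b c d = pt 0 0 0 1" using a True assms(3) by simp
      then show ?thesis unfolding Z0_def by blast
    qed
  qed
qed



lemma pt_eq: "pt a b c d = pt a' b' c' d' \<longleftrightarrow> a = a' \<and> b = b' \<and> c = c' \<and> d = d'"
proof
  assume h: "pt a b c d = pt a' b' c' d'"
  have "pt a b c d i = pt a' b' c' d' i" for i using h by simp
  from this[of 1] this[of 2] this[of 3] this[of 4] show "a = a' \<and> b = b' \<and> c = c' \<and> d = d'"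
    by (simp_all add: pt_def)
qed simp

lemma scale_pt: "(\<lambda>i. (k::'a::field) * pt a b c d i) = pt (k*a) (k*b) (k*c) (k*d)"
  unfolding pt_def by (rule ext) simp

lemma proj_scale: assumes "(k::'a::field) \<noteq> 0" shows "proj (\<lambda>i. k * q i) = proj q"
proof -
  have "(\<lambda>i. c * (k * q i)) = (\<lambda>i. (c * k) * q i)" for c by (simp add: mult.assoc)
  moreover have "(\<lambda>i. c * q i) = (\<lambda>i. (c / k) * (k * q i))" for c using assms by simp
  ultimately show ?thesis unfolding proj_def using assms
    by (auto; metis divide_eq_0_iff mult_eq_0_iff)
qed

lemma classify: assumes "p \<in> plocus \<alpha>" "(\<alpha>::'a::field) \<noteq> 0" "(2::'a) \<noteq> 0"
  shows "\<exists>k q. k \<noteq> 0 \<and> q \<in> Z0 \<union> Z1 \<alpha> \<union> Z2 \<alpha> \<union> Z3 \<union> Z4 \<alpha> \<and> p = (\<lambda>i. k * q i)"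
proof -
  obtain a b c d where p: "p = pt a b c d" using assms(1) unfolding plocus_def vecs4_def by blast
  have nz: "a \<noteq> 0 \<or> b \<noteq> 0 \<or> c \<noteq> 0 \<or> d \<noteq> 0" and E: "Eqs \<alpha> a b c d"
    using assms(1) unfolding p locus_pt by auto
  show ?thesis
  proof (cases "d = 0")
    case False
    have "Eqs \<alpha> ((1/d)*a) ((1/d)*b) ((1/d)*c) ((1/d)*d)" by (rule Eqs_scale[OF E])
    then have "Eqs \<alpha> (a/d) (b/d) (c/d) 1" using False by simp
    from class1[OF this assms(3) refl]
    have q: "pt (a/d) (b/d) (c/d) 1 \<in> Z0 \<union> Z1 \<alpha> \<union> Z2 \<alpha> \<union> Z3 \<union> Z4 \<alpha>" .
    have "p = (\<lambda>i. d * pt (a/d) (b/d) (c/d) 1 i)" unfolding p scale_pt using False by simp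
    with q False show ?thesis by blast
  next
    case True
    from class0[OF E assms(2) True]
    consider "b = 0 \<and> c = 0" | "a = 0 \<and> c = 0" | "a = 0 \<and> b = 0" by blast
    then show ?thesis
    proof cases
      case 1
      then have "p = (\<lambda>i. a * pt 1 0 0 0 i)" "a \<noteq> 0" unfolding p scale_pt using True nz by auto
      then show ?thesis unfolding Z0_def by blast
    next
      case 2
      then have "p = (\<lambda>i. b * pt 0 1 0 0 i)" "b \<noteq> 0" unfolding p scale_pt using True nz by auto
      then show ?thesis unfolding Z0_def by blast
    next
      case 3
      then have "p = (\<lambda>i. c * pt 0 0 1 0 i)" "c \<noteq> 0" unfolding p scale_pt using True nz by auto
      then show ?thesis unfolding Z0_def by blast
    qed
  qed
qed

lemma part1: assumes "(\<alpha>::'a::field) \<noteq> 0" "(2::'a) \<noteq> 0"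
  shows "proj ` plocus \<alpha> = proj ` (Z0 \<union> Z1 \<alpha> \<union> Z2 \<alpha> \<union> Z3 \<union> Z4 \<alpha>)"
proof
  show "proj ` plocus \<alpha> \<subseteq> proj ` (Z0 \<union> Z1 \<alpha> \<union> Z2 \<alpha> \<union> Z3 \<union> Z4 \<alpha>)"
  proof
    fix x assume "x \<in> proj ` plocus \<alpha>"
    then obtain p where x: "x = proj p" and p: "p \<in> plocus \<alpha>" by blast
    from classify[OF p assms] obtain k q where "k \<noteq> 0" "q \<in> Z0 \<union> Z1 \<alpha> \<union> Z2 \<alpha> \<union> Z3 \<union> Z4 \<alpha>" "p = (\<lambda>i. k * q i)"
      by blast
    then show "x \<in> proj ` (Z0 \<union> Z1 \<alpha> \<union> Z2 \<alpha> \<union> Z3 \<union> Z4 \<alpha>)" using x proj_scale by blast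
  qed
next
  show "proj ` (Z0 \<union> Z1 \<alpha> \<union> Z2 \<alpha> \<union> Z3 \<union> Z4 \<alpha>) \<subseteq> proj ` plocus \<alpha>"
    using Zall_locus[OF assms(1)] by blast
qed



definition rts :: "'a::field \<Rightarrow> 'a set" where "rts c = {x. x^2 = c}"

lemma sqrt_ex: assumes alg: "\<forall>q :: 'a::field poly. degree q \<noteq> 0 \<longrightarrow> (\<exists>x. poly q x = 0)"
  shows "\<exists>s::'a. s^2 = c"
proof -
  have "degree [:-c, 0, 1:] \<noteq> 0" by simp
  with alg obtain s where "poly [:-c, 0, 1:] s = 0" by blast
  then have "s^2 = c" by (simp add: power2_eq_square algebra_simps)
  then show ?thesis by blast
qed

lemma rts_card: assumes alg: "\<forall>q :: 'a::field poly. degree q \<noteq> 0 \<longrightarrow> (\<exists>x. poly q x = 0)"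
  and two: "(2::'a) \<noteq> 0" and c: "(c::'a) \<noteq> 0"
  shows "card (rts c) = 2" "finite (rts c)"
proof -
  obtain s where s: "s^2 = c" using sqrt_ex[OF alg] by blast
  have x: "x^2 = c \<longleftrightarrow> x = s \<or> x = -s" for x by (metis s power2_eq_iff)
  have e: "rts c = {s, -s}" unfolding rts_def using x by blast
  have "s \<noteq> 0" using s c by (metis power_zero_numeral)
  have "s \<noteq> -s"
  proof
    assume "s = -s"
    then have "s + s = 0" using eq_neg_iff_add_eq_0 by blast
    then have "2 * s = 0" by (metis mult_2)
    with two \<open>s \<noteq> 0\<close> show False by simp
  qed
  then show "card (rts c) = 2" "finite (rts c)" unfolding e by auto
qed

lemma Z1_img: "Z1 \<alpha> = (\<lambda>(x,y). pt x 1 y 1) ` (rts (-2*(1+\<alpha>)) \<times> rts 2)"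
  unfolding Z1_def rts_def by auto
lemma Z2_img: "Z2 \<alpha> = (\<lambda>(x,y). pt x (-1) y 1) ` (rts (-2*(1-\<alpha>)) \<times> rts (-2))"
  unfolding Z2_def rts_def by auto
lemma Z3_img: "Z3 = (\<lambda>(x,y). pt x y 0 1) ` (rts (-2) \<times> rts (-1))"
  unfolding Z3_def rts_def by auto
lemma Z4_img: assumes "(\<alpha>::'a::field) \<noteq> 0"
  shows "Z4 \<alpha> = (\<lambda>(x,y). pt 0 x y 1) ` (SIGMA x:{x. \<alpha> * x^2 + 2 * x + \<alpha> = 0}. rts (-2 * x^2 / \<alpha>))"
proof -
  have key: "(\<alpha> * y^2 = -2 * x^2) \<longleftrightarrow> (y^2 = -2 * x^2 / \<alpha>)" for x y
    by (subst nonzero_eq_divide_eq[OF assms]) (simp add: mult.commute)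
  show ?thesis unfolding Z4_def rts_def key by auto
qed

lemma card_prod_img:
  assumes "inj f" "card A = 2" "card B = 2"
  shows "card (f ` (A \<times> B)) = 4"
proof -
  have "card (f ` (A \<times> B)) = card (A \<times> B)" using assms(1) by (simp add: card_image inj_on_subset)
  then show ?thesis using assms by (simp add: card_cartesian_product)
qed

lemma quad_roots:
  assumes alg: "\<forall>q :: 'a::field poly. degree q \<noteq> 0 \<longrightarrow> (\<exists>x. poly q x = 0)"
  and a: "(\<alpha>::'a) * (1 - \<alpha>^2) \<noteq> 0" and two: "(2::'a) \<noteq> 0"
  shows "\<exists>r. r \<noteq> 0 \<and> r \<noteq> 1/r \<and> {x. \<alpha> * x^2 + 2 * x + \<alpha> = 0} = {r, 1/r}"
proof -
  have a0: "\<alpha> \<noteq> 0" and a1: "\<alpha>^2 \<noteq> 1" using a by auto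
  have "degree [:\<alpha>, 2, \<alpha>:] \<noteq> 0" using a0 by simp
  with alg obtain r where "poly [:\<alpha>, 2, \<alpha>:] r = 0" by blast
  then have r: "\<alpha> * r^2 + 2 * r + \<alpha> = 0" by (simp add: power2_eq_square algebra_simps)
  have r0: "r \<noteq> 0" using r a0 by auto
  have rr: "\<alpha> * (1/r + r) + 2 = 0"
  proof -
    have "(\<alpha> * (1/r + r) + 2) * r = \<alpha> * r^2 + 2 * r + \<alpha>"
      using r0 by (simp add: algebra_simps power2_eq_square)
    with r r0 show ?thesis by simp
  qed
  have inv: "\<alpha> * (1/r)^2 + 2 * (1/r) + \<alpha> = 0"
  proof -
    have "(\<alpha> * (1/r)^2 + 2 * (1/r) + \<alpha>) * r^2 = \<alpha> * r^2 + 2 * r + \<alpha>"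
      using r0 by (simp add: algebra_simps power2_eq_square)
    with r r0 show ?thesis by simp
  qed
  have sub: "x = r \<or> x = 1/r" if x: "\<alpha> * x^2 + 2 * x + \<alpha> = 0" for x
  proof -
    have "(x - r) * (\<alpha> * (x + r) + 2) = 0" using x r by algebra
    then have "x = r \<or> \<alpha> * (x + r) + 2 = 0" by simp
    moreover have "\<alpha> * (x + r) + 2 = 0 \<Longrightarrow> x = 1/r"
    proof -
      assume "\<alpha> * (x + r) + 2 = 0"
      with rr have "\<alpha> * (x - 1/r) = 0" by algebra
      with a0 show "x = 1/r" by simp
    qed
    ultimately show ?thesis by blast
  qed
  have e: "{x. \<alpha> * x^2 + 2 * x + \<alpha> = 0} = {r, 1/r}" using sub r inv by auto
  have "r \<noteq> 1/r"
  proof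
    assume "r = 1/r"
    then have "r^2 = 1" using r0 by (simp add: power2_eq_square field_simps)
    then have "r = 1 \<or> r = -1" by (simp add: power2_eq_1_iff)
    then show False
    proof
      assume "r = 1" with r have "2 * (\<alpha> + 1) = 0" by (simp add: algebra_simps)
      with two have "\<alpha> + 1 = 0" by (metis mult_eq_0_iff)
      then have "\<alpha> = -1" by algebra
      then have "\<alpha>^2 = 1" by simp
      with a1 show False by simp
    next
      assume "r = -1" with r have "2 * (\<alpha> - 1) = 0" by (simp add: algebra_simps)
      with two have "\<alpha> = 1" by (metis mult_eq_0_iff right_minus_eq)
      then have "\<alpha>^2 = 1" by simp
      with a1 show False by simp
    qed
  qed
  with r0 e show ?thesis by blast
qed



lemma pt_app: "pt a b c d 1 = a" "pt a b c d 2 = b" "pt a b c d 3 = c" "pt a b c d 4 = d" "pt a b c d (Suc 0) = a"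
  by (simp_all add: pt_def)

lemma nz_sq: "(x::'a::field)^2 = c \<Longrightarrow> c \<noteq> 0 \<Longrightarrow> x \<noteq> 0" by auto

lemma props:
  assumes two: "(2::'a::field) \<noteq> 0" and a: "(\<alpha>::'a) * (1 - \<alpha>^2) \<noteq> 0"
  shows "p \<in> Z0 \<Longrightarrow> (p 4 = 0 \<and> p \<in> {pt 1 0 0 0, pt 0 1 0 0, pt 0 0 1 0}) \<or> (p 4 = 1 \<and> p 1 = 0 \<and> p 2 = 0 \<and> p 3 = 0)"
    and "p \<in> Z1 \<alpha> \<Longrightarrow> p 4 = 1 \<and> p 2 = 1 \<and> p 1 \<noteq> 0 \<and> p 3 \<noteq> 0"
    and "p \<in> Z2 \<alpha> \<Longrightarrow> p 4 = 1 \<and> p 2 = -1 \<and> p 1 \<noteq> 0 \<and> p 3 \<noteq> 0"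
    and "p \<in> Z3 \<Longrightarrow> p 4 = 1 \<and> p 3 = 0 \<and> p 1 \<noteq> 0"
    and "p \<in> Z4 \<alpha> \<Longrightarrow> p 4 = 1 \<and> p 1 = 0 \<and> p 2 \<noteq> 0"
proof -
  have a0: "\<alpha> \<noteq> 0" and a1: "1 + \<alpha> \<noteq> 0" and a2: "1 - \<alpha> \<noteq> 0"
  proof -
    show "\<alpha> \<noteq> 0" using a by auto
    have "1 - \<alpha>^2 = (1 + \<alpha>) * (1 - \<alpha>)" by algebra
    then show "1 + \<alpha> \<noteq> 0" "1 - \<alpha> \<noteq> 0" using a by auto
  qed
  have m2: "- 2 * x \<noteq> 0" if "x \<noteq> 0" for x :: 'a using two that by simp
  show "p \<in> Z0 \<Longrightarrow> (p 4 = 0 \<and> p \<in> {pt 1 0 0 0, pt 0 1 0 0, pt 0 0 1 0}) \<or> (p 4 = 1 \<and> p 1 = 0 \<and> p 2 = 0 \<and> p 3 = 0)"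
    unfolding Z0_def by (auto simp: pt_app)
  show "p \<in> Z1 \<alpha> \<Longrightarrow> p 4 = 1 \<and> p 2 = 1 \<and> p 1 \<noteq> 0 \<and> p 3 \<noteq> 0"
    unfolding Z1_def using m2[OF a1] two by (auto simp: pt_app dest!: nz_sq)
  show "p \<in> Z2 \<alpha> \<Longrightarrow> p 4 = 1 \<and> p 2 = -1 \<and> p 1 \<noteq> 0 \<and> p 3 \<noteq> 0"
    unfolding Z2_def using m2[OF a2] two by (auto simp: pt_app dest!: nz_sq)
  show "p \<in> Z3 \<Longrightarrow> p 4 = 1 \<and> p 3 = 0 \<and> p 1 \<noteq> 0"
    unfolding Z3_def using two by (auto simp: pt_app dest!: nz_sq)
  show "p \<in> Z4 \<alpha> \<Longrightarrow> p 4 = 1 \<and> p 1 = 0 \<and> p 2 \<noteq> 0"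
    unfolding Z4_def using a0 by (auto simp: pt_app)
qed


lemma fin_card: "card A = 4 \<Longrightarrow> finite A" by (metis card.infinite zero_neq_numeral)

lemma card_Zall:
  assumes alg: "\<forall>q :: 'a::field poly. degree q \<noteq> 0 \<longrightarrow> (\<exists>x. poly q x = 0)"
  and two: "(2::'a) \<noteq> 0" and a: "(\<alpha>::'a) * (1 - \<alpha>^2) \<noteq> 0"
  shows "card (Z0 \<union> Z1 \<alpha> \<union> Z2 \<alpha> \<union> Z3 \<union> Z4 \<alpha>) = 20"
proof -
  have a0: "\<alpha> \<noteq> 0" and a1: "1 + \<alpha> \<noteq> 0" and a2: "1 - \<alpha> \<noteq> 0"
  proof -
    show "\<alpha> \<noteq> 0" using a by auto
    have "1 - \<alpha>^2 = (1 + \<alpha>) * (1 - \<alpha>)" by algebra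
    then show "1 + \<alpha> \<noteq> 0" "1 - \<alpha> \<noteq> 0" using a by auto
  qed
  have m2: "- 2 * x \<noteq> 0" if "x \<noteq> 0" for x :: 'a using two that by simp
  have m2': "(-2::'a) \<noteq> 0" "(2::'a) \<noteq> 0" "(-1::'a) \<noteq> 0" using two by simp_all
  note R = rts_card[OF alg two]
  have c0: "card (Z0 :: (nat \<Rightarrow> 'a) set) = 4" unfolding Z0_def by (simp add: pt_eq)
  have c1: "card (Z1 \<alpha>) = 4" unfolding Z1_img
    by (rule card_prod_img[OF _ R(1)[OF m2[OF a1]] R(1)[OF m2'(2)]]) (auto simp: inj_def pt_eq)
  have c2: "card (Z2 \<alpha>) = 4" unfolding Z2_img
    by (rule card_prod_img[OF _ R(1)[OF m2[OF a2]] R(1)[OF m2'(1)]]) (auto simp: inj_def pt_eq)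
  have c3: "card (Z3 :: (nat \<Rightarrow> 'a) set) = 4" unfolding Z3_img
    by (rule card_prod_img[OF _ R(1)[OF m2'(1)] R(1)[OF m2'(3)]]) (auto simp: inj_def pt_eq)
  obtain r where r0: "r \<noteq> 0" and r1: "r \<noteq> 1/r" and rs: "{x. \<alpha> * x^2 + 2 * x + \<alpha> = 0} = {r, 1/r}"
    using quad_roots[OF alg a two] by blast
  have nzr: "-2 * x^2 / \<alpha> \<noteq> 0" if "x \<noteq> 0" for x using that a0 two by simp
  have c4: "card (Z4 \<alpha>) = 4"
  proof -
    have "card (Z4 \<alpha>) = card (SIGMA x:{r, 1/r}. rts (-2 * x^2 / \<alpha>))"
      unfolding Z4_img[OF a0] rs
      by (rule card_image) (auto simp: inj_on_def pt_eq)
    also have "\<dots> = card (rts (-2 * r^2 / \<alpha>)) + card (rts (-2 * (1/r)^2 / \<alpha>))"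
      using r1 R(2)[OF nzr] r0 by simp
    also have "\<dots> = 4" using R(1)[OF nzr] r0 by simp
    finally show ?thesis .
  qed
  note P = props[OF two a]
  have one: "(1::'a) \<noteq> -1" using two by (metis one_add_one add_eq_0_iff2)
  have x01: False if "p \<in> Z0" "p \<in> Z1 \<alpha>" for p :: "nat \<Rightarrow> 'a"
    using P(1)[OF that(1)] P(2)[OF that(2)] by auto
  have x02: False if "p \<in> Z0" "p \<in> Z2 \<alpha>" for p :: "nat \<Rightarrow> 'a"
    using P(1)[OF that(1)] P(3)[OF that(2)] by auto
  have x12: False if "p \<in> Z1 \<alpha>" "p \<in> Z2 \<alpha>" for p :: "nat \<Rightarrow> 'a"
    using P(2)[OF that(1)] P(3)[OF that(2)] one by auto
  have x03: False if "p \<in> Z0" "p \<in> Z3" for p :: "nat \<Rightarrow> 'a"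
    using P(1)[OF that(1)] P(4)[OF that(2)] by auto
  have x13: False if "p \<in> Z1 \<alpha>" "p \<in> Z3" for p :: "nat \<Rightarrow> 'a"
    using P(2)[OF that(1)] P(4)[OF that(2)] by auto
  have x23: False if "p \<in> Z2 \<alpha>" "p \<in> Z3" for p :: "nat \<Rightarrow> 'a"
    using P(3)[OF that(1)] P(4)[OF that(2)] by auto
  have x04: False if "p \<in> Z0" "p \<in> Z4 \<alpha>" for p :: "nat \<Rightarrow> 'a"
    using P(1)[OF that(1)] P(5)[OF that(2)] by auto
  have x14: False if "p \<in> Z1 \<alpha>" "p \<in> Z4 \<alpha>" for p :: "nat \<Rightarrow> 'a"
    using P(2)[OF that(1)] P(5)[OF that(2)] by auto
  have x24: False if "p \<in> Z2 \<alpha>" "p \<in> Z4 \<alpha>" for p :: "nat \<Rightarrow> 'a"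
    using P(3)[OF that(1)] P(5)[OF that(2)] by auto
  have x34: False if "p \<in> Z3" "p \<in> Z4 \<alpha>" for p :: "nat \<Rightarrow> 'a"
    using P(4)[OF that(1)] P(5)[OF that(2)] by auto
  have d1: "Z0 \<inter> Z1 \<alpha> = {}" using x01 by blast
  have d2: "(Z0 \<union> Z1 \<alpha>) \<inter> Z2 \<alpha> = {}" using x02 x12 by blast
  have d3: "(Z0 \<union> Z1 \<alpha> \<union> Z2 \<alpha>) \<inter> Z3 = {}" using x03 x13 x23 by blast
  have d4: "(Z0 \<union> Z1 \<alpha> \<union> Z2 \<alpha> \<union> Z3) \<inter> Z4 \<alpha> = {}" using x04 x14 x24 x34 by blast
  have f: "finite (Z0 :: (nat \<Rightarrow> 'a) set)" "finite (Z1 \<alpha>)" "finite (Z2 \<alpha>)" "finite (Z3 :: (nat \<Rightarrow> 'a) set)" "finite (Z4 \<alpha>)"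
    using fin_card[OF c0] fin_card[OF c1] fin_card[OF c2] fin_card[OF c3] fin_card[OF c4] by auto
  show ?thesis
    using c0 c1 c2 c3 c4 f d1 d2 d3 d4 by (simp add: card_Un_disjoint)
qed


lemma Zall_44:
  assumes two: "(2::'a::field) \<noteq> 0" and a: "(\<alpha>::'a) * (1 - \<alpha>^2) \<noteq> 0"
    and p: "p \<in> Z0 \<union> Z1 \<alpha> \<union> Z2 \<alpha> \<union> Z3 \<union> Z4 \<alpha>"
  shows "(p 4 = 0 \<and> p \<in> {pt 1 0 0 0, pt 0 1 0 0, pt 0 0 1 0}) \<or> p 4 = 1"
  using p props[OF two a, of p] by blast

lemma proj_inj:
  assumes two: "(2::'a::field) \<noteq> 0" and a: "(\<alpha>::'a) * (1 - \<alpha>^2) \<noteq> 0"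
  shows "inj_on proj (Z0 \<union> Z1 \<alpha> \<union> Z2 \<alpha> \<union> Z3 \<union> Z4 \<alpha>)"
proof (rule inj_onI)
  fix p q assume p: "p \<in> Z0 \<union> Z1 \<alpha> \<union> Z2 \<alpha> \<union> Z3 \<union> Z4 \<alpha>" and q: "q \<in> Z0 \<union> Z1 \<alpha> \<union> Z2 \<alpha> \<union> Z3 \<union> Z4 \<alpha>"
    and pq: "proj p = proj q"
  have "p \<in> proj p" unfolding proj_def by (rule CollectI, rule exI[of _ 1]) simp
  then have "p \<in> proj q" using pq by simp
  then obtain c where c: "c \<noteq> 0" and pc: "p = (\<lambda>i. c * q i)" unfolding proj_def by blast
  have p4: "p 4 = c * q 4" using pc by simp
  note Pp = Zall_44[OF two a p] and Pq = Zall_44[OF two a q]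
  show "p = q"
  proof (cases "q 4 = 1")
    case True
    then have "p 4 = c" using p4 by simp
    with Pp c have "c = 1" by auto
    then show ?thesis using pc by simp
  next
    case False
    with Pq have q4: "q 4 = 0" and qE: "q \<in> {pt 1 0 0 0, pt 0 1 0 0, pt 0 0 1 0}" by auto
    then have "p 4 = 0" using p4 by simp
    with Pp have pE: "p \<in> {pt 1 0 0 0, pt 0 1 0 0, pt 0 0 1 0}" by auto
    from pE qE pc show ?thesis by (auto simp: scale_pt pt_eq)
  qed
qed

lemma part2:
  assumes alg: "\<forall>q :: 'a::field poly. degree q \<noteq> 0 \<longrightarrow> (\<exists>x. poly q x = 0)"
  and two: "(2::'a) \<noteq> 0" and a: "(\<alpha>::'a) * (1 - \<alpha>^2) \<noteq> 0"
  shows "card (proj ` (Z0 \<union> Z1 \<alpha> \<union> Z2 \<alpha> \<union> Z3 \<union> Z4 \<alpha>)) = 20"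
  using card_image[OF proj_inj[OF two a]] card_Zall[OF alg two a] by simp


lemma ds1: "dminor \<alpha> (\<lambda>i. k * p i) v {1,2,3,4} = k^3 * dminor \<alpha> p v {1,2,3,4}"
  unfolding d1 by algebra
lemma rs1: "{1,2,3,4} \<in> row_sets" unfolding row_sets_eq RS_def by simp
lemma ds2: "dminor \<alpha> (\<lambda>i. k * p i) v {1,2,3,5} = k^3 * dminor \<alpha> p v {1,2,3,5}"
  unfolding d2 by algebra
lemma rs2: "{1,2,3,5} \<in> row_sets" unfolding row_sets_eq RS_def by simp
lemma ds3: "dminor \<alpha> (\<lambda>i. k * p i) v {1,2,3,6} = k^3 * dminor \<alpha> p v {1,2,3,6}"
  unfolding d3 by algebra
lemma rs3: "{1,2,3,6} \<in> row_sets" unfolding row_sets_eq RS_def by simp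
lemma ds4: "dminor \<alpha> (\<lambda>i. k * p i) v {1,2,4,5} = k^3 * dminor \<alpha> p v {1,2,4,5}"
  unfolding d4 by algebra
lemma rs4: "{1,2,4,5} \<in> row_sets" unfolding row_sets_eq RS_def by simp
lemma ds5: "dminor \<alpha> (\<lambda>i. k * p i) v {1,2,4,6} = k^3 * dminor \<alpha> p v {1,2,4,6}"
  unfolding d5 by algebra
lemma rs5: "{1,2,4,6} \<in> row_sets" unfolding row_sets_eq RS_def by simp
lemma ds6: "dminor \<alpha> (\<lambda>i. k * p i) v {1,2,5,6} = k^3 * dminor \<alpha> p v {1,2,5,6}"
  unfolding d6 by algebra
lemma rs6: "{1,2,5,6} \<in> row_sets" unfolding row_sets_eq RS_def by simp
lemma ds7: "dminor \<alpha> (\<lambda>i. k * p i) v {1,3,4,5} = k^3 * dminor \<alpha> p v {1,3,4,5}"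
  unfolding d7 by algebra
lemma rs7: "{1,3,4,5} \<in> row_sets" unfolding row_sets_eq RS_def by simp
lemma ds8: "dminor \<alpha> (\<lambda>i. k * p i) v {1,3,4,6} = k^3 * dminor \<alpha> p v {1,3,4,6}"
  unfolding d8 by algebra
lemma rs8: "{1,3,4,6} \<in> row_sets" unfolding row_sets_eq RS_def by simp
lemma ds9: "dminor \<alpha> (\<lambda>i. k * p i) v {1,3,5,6} = k^3 * dminor \<alpha> p v {1,3,5,6}"
  unfolding d9 by algebra
lemma rs9: "{1,3,5,6} \<in> row_sets" unfolding row_sets_eq RS_def by simp
lemma ds10: "dminor \<alpha> (\<lambda>i. k * p i) v {1,4,5,6} = k^3 * dminor \<alpha> p v {1,4,5,6}"
  unfolding d10 by algebra
lemma rs10: "{1,4,5,6} \<in> row_sets" unfolding row_sets_eq RS_def by simp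
lemma ds11: "dminor \<alpha> (\<lambda>i. k * p i) v {2,3,4,5} = k^3 * dminor \<alpha> p v {2,3,4,5}"
  unfolding d11 by algebra
lemma rs11: "{2,3,4,5} \<in> row_sets" unfolding row_sets_eq RS_def by simp
lemma ds12: "dminor \<alpha> (\<lambda>i. k * p i) v {2,3,4,6} = k^3 * dminor \<alpha> p v {2,3,4,6}"
  unfolding d12 by algebra
lemma rs12: "{2,3,4,6} \<in> row_sets" unfolding row_sets_eq RS_def by simp
lemma ds13: "dminor \<alpha> (\<lambda>i. k * p i) v {2,3,5,6} = k^3 * dminor \<alpha> p v {2,3,5,6}"
  unfolding d13 by algebra
lemma rs13: "{2,3,5,6} \<in> row_sets" unfolding row_sets_eq RS_def by simp
lemma ds14: "dminor \<alpha> (\<lambda>i. k * p i) v {2,4,5,6} = k^3 * dminor \<alpha> p v {2,4,5,6}"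
  unfolding d14 by algebra
lemma rs14: "{2,4,5,6} \<in> row_sets" unfolding row_sets_eq RS_def by simp
lemma ds15: "dminor \<alpha> (\<lambda>i. k * p i) v {3,4,5,6} = k^3 * dminor \<alpha> p v {3,4,5,6}"
  unfolding d15 by algebra
lemma rs15: "{3,4,5,6} \<in> row_sets" unfolding row_sets_eq RS_def by simp

lemma dminor_scale_all:
  assumes "\<forall>R\<in>row_sets. dminor \<alpha> (\<lambda>i. k * p i) v R = 0" "(k::'a::field) \<noteq> 0"
  shows "\<forall>R\<in>row_sets. dminor \<alpha> p v R = 0"
  using assms unfolding row_sets_eq RS_def ball_ins ball_emp ds1 ds2 ds3 ds4 ds5 ds6 ds7 ds8 ds9 ds10 ds11 ds12 ds13 ds14 ds15 by simp



lemmas cl = pt_app power_one mult_1_left mult_1_right power_zero_numeral mult_zero_left mult_zero_right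
  add_0_left add_0_right diff_zero diff_0 minus_zero

lemma four_nz: "(2::'a::field) \<noteq> 0 \<Longrightarrow> (4::'a) \<noteq> 0"
proof -
  assume two: "(2::'a) \<noteq> 0"
  have "(4::'a) = 2*2" by simp
  with two show ?thesis by (metis mult_eq_0_iff)
qed

lemma two2: "(2::'a::field) \<noteq> 0 \<Longrightarrow> 2*(2*X) = 0 \<Longrightarrow> X = (0::'a)"
  by (metis mult_eq_0_iff)

lemma mo_Z1:
  assumes two: "(2::'a::field) \<noteq> 0" and a1: "1 + (\<alpha>::'a) \<noteq> 0"
    and s2: "s^2 = -2*(1+\<alpha>)" and t2: "t^2 = 2"
    and H: "\<forall>R\<in>row_sets. dminor \<alpha> (pt s 1 t 1) (pt e f g h) R = 0"
  shows "pt e f g h = (\<lambda>i. f * pt s 1 t 1 i)"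
proof -
  have c: "-2*(1+\<alpha>) \<noteq> 0" using two a1 by (subst mult_eq_0_iff) simp
  have s0: "s \<noteq> 0" using s2 c by (metis power_zero_numeral)
  have t0: "t \<noteq> 0" using t2 two by auto
  have four: "(4::'a) \<noteq> 0"
  proof -
    have "(4::'a) = 2*2" by simp
    with two show ?thesis by (metis mult_eq_0_iff)
  qed
  have h1: "dminor \<alpha> (pt s 1 t 1) (pt e f g h) {1,2,3,4} = 0" using H rs1 by blast
  have h2: "dminor \<alpha> (pt s 1 t 1) (pt e f g h) {1,2,3,5} = 0" using H rs2 by blast
  have h3: "dminor \<alpha> (pt s 1 t 1) (pt e f g h) {1,2,3,6} = 0" using H rs3 by blast
  note h1' = h1[unfolded d1 pt_app power_one mult_1_left mult_1_right] and h2' = h2[unfolded d2 pt_app power_one mult_1_left mult_1_right] and h3' = h3[unfolded d3 pt_app power_one mult_1_left mult_1_right]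
  have "2*(s*(t*(f - h))) = 0" using h3' by algebra
  with two s0 t0 have fh: "h = f" by simp
  have "2*(2*(s*(t*f - g))) = 0" using h2' fh t2 by algebra
  with two four s0 have gf: "g = t*f" by simp
  have "2*(2*((1+\<alpha>)*(t*(e - s*f)))) = 0" using h1' gf s2 t2 by algebra
  with two four a1 t0 have ef: "e = s*f" by simp
  show ?thesis unfolding scale_pt using fh gf ef by (simp add: pt_eq mult.commute)
qed


lemma mo_Z2:
  assumes two: "(2::'a::field) \<noteq> 0" and a2: "1 - (\<alpha>::'a) \<noteq> 0"
    and s2: "s^2 = -2*(1-\<alpha>)" and t2: "t^2 = -2"
    and H: "\<forall>R\<in>row_sets. dminor \<alpha> (pt s (-1) t 1) (pt e f g h) R = 0"
  shows "pt e f g h = (\<lambda>i. h * pt s (-1) t 1 i)"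
proof -
  have c: "-2*(1-\<alpha>) \<noteq> 0" using two a2 by (subst mult_eq_0_iff) simp
  have s0: "s \<noteq> 0" using s2 c by (metis power_zero_numeral)
  have t0: "t \<noteq> 0" using t2 two by auto
  have four: "(4::'a) \<noteq> 0" using four_nz[OF two] .
  have a2': "\<alpha> - 1 \<noteq> 0" using a2 by (metis eq_iff_diff_eq_0)
  have h1: "dminor \<alpha> (pt s (-1) t 1) (pt e f g h) {1,2,3,4} = 0" using H rs1 by blast
  have h2: "dminor \<alpha> (pt s (-1) t 1) (pt e f g h) {1,2,3,5} = 0" using H rs2 by blast
  have h3: "dminor \<alpha> (pt s (-1) t 1) (pt e f g h) {1,2,3,6} = 0" using H rs3 by blast
  note h1' = h1[unfolded d1 cl] and h2' = h2[unfolded d2 cl] and h3' = h3[unfolded d3 cl]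
  have "2*(s*(t*(f + h))) = 0" using h3' by algebra
  with two s0 t0 have fh: "f = -h" by (simp add: eq_neg_iff_add_eq_0)
  have "2*(2*(s*(t*f + g))) = 0" using h2' fh t2 by algebra
  with two four s0 have gf: "g = -(t*f)" by (simp add: eq_neg_iff_add_eq_0 add.commute)
  have "2*(2*((\<alpha> - 1)*(t*(e - s*h)))) = 0" using h1' gf fh s2 t2 by algebra
  with two four a2' t0 have eh: "e = s*h" by simp
  show ?thesis unfolding scale_pt using fh gf eh by (simp add: pt_eq mult.commute)
qed

lemma mo_Z3:
  assumes two: "(2::'a::field) \<noteq> 0"
    and s2: "s^2 = -2" and b2: "b^2 = (-1::'a)"
    and H: "\<forall>R\<in>row_sets. dminor \<alpha> (pt s b 0 1) (pt e f g h) R = 0"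
  shows "pt e f g h = (\<lambda>i. h * pt s b 0 1 i)"
proof -
  have s0: "s \<noteq> 0" using s2 two by auto
  have four: "(4::'a) \<noteq> 0" using four_nz[OF two] .
  have h1: "dminor \<alpha> (pt s b 0 1) (pt e f g h) {1,2,3,4} = 0" using H rs1 by blast
  have h7: "dminor \<alpha> (pt s b 0 1) (pt e f g h) {1,3,4,5} = 0" using H rs7 by blast
  have h10: "dminor \<alpha> (pt s b 0 1) (pt e f g h) {1,4,5,6} = 0" using H rs10 by blast
  note h1' = h1[unfolded d1 cl] and h7' = h7[unfolded d7 cl] and h10' = h10[unfolded d10 cl]
  have "2*(2*(s*g)) = 0" using h1' s2 b2 by algebra
  with two four s0 have g0: "g = 0" by simp
  have "2*(2*(b*f + h)) = 0" using h10' s2 b2 by algebra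
  with two have hb: "b*f + h = 0" by (rule two2)
  have fb: "f = b*h" using hb b2 by algebra
  have "2*(2*(e + s*b*f)) = 0" using h7' s2 b2 by algebra
  with two have "e + s*b*f = 0" by (rule two2)
  then have eh: "e = s*h" using fb b2 by algebra
  show ?thesis unfolding scale_pt using fb g0 eh by (simp add: pt_eq mult.commute)
qed

lemma mo_Z4:
  assumes two: "(2::'a::field) \<noteq> 0" and a: "(\<alpha>::'a) * (1 - \<alpha>^2) \<noteq> 0"
    and b: "\<alpha> * b^2 + 2 * b + \<alpha> = 0" and c: "\<alpha> * c^2 = - 2 * b^2"
    and H: "\<forall>R\<in>row_sets. dminor \<alpha> (pt 0 b c 1) (pt e f g h) R = 0"
  shows "pt e f g h = (\<lambda>i. h * pt 0 b c 1 i)"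
proof -
  have a0: "\<alpha> \<noteq> 0" using a by auto
  have a1: "1 - \<alpha>^2 \<noteq> 0" using a by auto
  have four: "(4::'a) \<noteq> 0" using four_nz[OF two] .
  have b0: "b \<noteq> 0" using b a0 by auto
  have c0: "c \<noteq> 0" using c b0 a0 two by auto
  have b1: "b^2 - 1 \<noteq> 0"
  proof
    assume "b^2 - 1 = 0"
    then have "b = 1 \<or> b = -1" by (simp add: power2_eq_1_iff)
    then have "1 - \<alpha>^2 = 0"
    proof
      assume "b = 1"
      with b have "2 * (\<alpha> + 1) = 0" by (simp add: algebra_simps)
      with two have "\<alpha> + 1 = 0" by (metis mult_eq_0_iff)
      then show "1 - \<alpha>^2 = 0" by algebra
    next
      assume "b = -1"
      with b have "2 * (\<alpha> - 1) = 0" by (simp add: algebra_simps)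
      with two have "\<alpha> - 1 = 0" by (metis mult_eq_0_iff)
      then show "1 - \<alpha>^2 = 0" by algebra
    qed
    with a1 show False by simp
  qed
  have ab: "\<alpha>*b + 1 \<noteq> 0"
  proof
    assume "\<alpha>*b + 1 = 0"
    with b have "\<alpha> + b = 0" by algebra
    with \<open>\<alpha>*b + 1 = 0\<close> have "1 - \<alpha>^2 = 0" by algebra
    with a1 show False by simp
  qed
  have h3: "dminor \<alpha> (pt 0 b c 1) (pt e f g h) {1,2,3,6} = 0" using H rs3 by blast
  have h4: "dminor \<alpha> (pt 0 b c 1) (pt e f g h) {1,2,4,5} = 0" using H rs4 by blast
  have h10: "dminor \<alpha> (pt 0 b c 1) (pt e f g h) {1,4,5,6} = 0" using H rs10 by blast
  note h3' = h3[unfolded d3 cl] and h4' = h4[unfolded d4 cl] and h10' = h10[unfolded d10 cl]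
  have "c*((b^2 - 1)*e) = 0" using h3' by algebra
  with c0 b1 have e0: "e = 0" by simp
  have "2*(2*(b^2*(b*g - c*f))) = 0" using h4' c e0 by algebra
  with two four b0 have bg: "b*g = c*f" by simp
  have "2*(c^2*((\<alpha>*b+1)*f + (\<alpha>+b)*h)) = 0" using h10' e0 b by algebra
  with two c0 have "(\<alpha>*b+1)*f + (\<alpha>+b)*h = 0" by simp
  then have "(\<alpha>*b+1)*(f - b*h) = 0" using b by algebra
  with ab have fb: "f = b*h" by simp
  have "b*(g - c*h) = 0" using bg fb by algebra
  with b0 have gc: "g = c*h" by simp
  show ?thesis unfolding scale_pt using e0 fb gc by (simp add: pt_eq mult.commute)
qed

lemma mo_Z0:
  assumes "(\<alpha>::'a::field) \<noteq> 0" "(2::'a) \<noteq> 0"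
  shows "\<forall>R\<in>row_sets. dminor \<alpha> (pt 1 0 0 0) (pt e f g h) R = 0 \<Longrightarrow> pt e f g h = (\<lambda>i. e * pt 1 0 0 0 i)"
    and "\<forall>R\<in>row_sets. dminor \<alpha> (pt 0 1 0 0) (pt e f g h) R = 0 \<Longrightarrow> pt e f g h = (\<lambda>i. f * pt 0 1 0 0 i)"
    and "\<forall>R\<in>row_sets. dminor \<alpha> (pt 0 0 1 0) (pt e f g h) R = 0 \<Longrightarrow> pt e f g h = (\<lambda>i. g * pt 0 0 1 0 i)"
    and "\<forall>R\<in>row_sets. dminor \<alpha> (pt 0 0 0 1) (pt e f g h) R = 0 \<Longrightarrow> pt e f g h = (\<lambda>i. h * pt 0 0 0 1 i)"
proof -
  assume H: "\<forall>R\<in>row_sets. dminor \<alpha> (pt 1 0 0 0) (pt e f g h) R = 0"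
  have "g = 0" using H[rule_format, OF rs1, unfolded d1 cl] by simp
  moreover have "h = 0" using H[rule_format, OF rs7, unfolded d7 cl] by simp
  moreover have "f = 0" using H[rule_format, OF rs8, unfolded d8 cl] by simp
  ultimately show "pt e f g h = (\<lambda>i. e * pt 1 0 0 0 i)" unfolding scale_pt by simp
next
  assume H: "\<forall>R\<in>row_sets. dminor \<alpha> (pt 0 1 0 0) (pt e f g h) R = 0"
  have "g = 0" using H[rule_format, OF rs4, unfolded d4 cl] assms by simp
  moreover have "h = 0" using H[rule_format, OF rs11, unfolded d11 cl] assms by simp
  moreover have "e = 0" using H[rule_format, OF rs14, unfolded d14 cl] by simp
  ultimately show "pt e f g h = (\<lambda>i. f * pt 0 1 0 0 i)" unfolding scale_pt by simp
next
  assume H: "\<forall>R\<in>row_sets. dminor \<alpha> (pt 0 0 1 0) (pt e f g h) R = 0"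
  have "e = 0" using H[rule_format, OF rs2, unfolded d2 cl] by simp
  moreover have "f = 0" using H[rule_format, OF rs4, unfolded d4 cl] assms by simp
  moreover have "h = 0" using H[rule_format, OF rs6, unfolded d6 cl] by simp
  ultimately show "pt e f g h = (\<lambda>i. g * pt 0 0 1 0 i)" unfolding scale_pt by simp
next
  assume H: "\<forall>R\<in>row_sets. dminor \<alpha> (pt 0 0 0 1) (pt e f g h) R = 0"
  have "e = 0" using H[rule_format, OF rs9, unfolded d9 cl] by simp
  moreover have "f = 0" using H[rule_format, OF rs13, unfolded d13 cl] by simp
  moreover have "g = 0" using H[rule_format, OF rs15, unfolded d15 cl] assms by simp
  ultimately show "pt e f g h = (\<lambda>i. h * pt 0 0 0 1 i)" unfolding scale_pt by simp
qed


lemma mult_one_Z: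
  assumes two: "(2::'a::field) \<noteq> 0" and a: "(\<alpha>::'a) * (1 - \<alpha>^2) \<noteq> 0"
    and q: "q \<in> Z0 \<union> Z1 \<alpha> \<union> Z2 \<alpha> \<union> Z3 \<union> Z4 \<alpha>"
  shows "mult_one \<alpha> q"
  unfolding mult_one_def
proof (intro ballI impI)
  fix v assume "v \<in> vecs4" and H: "\<forall>R\<in>row_sets. dminor \<alpha> q v R = 0"
  then obtain e f g h where v: "v = pt e f g h" unfolding vecs4_def by blast
  have a0: "\<alpha> \<noteq> 0" and a1: "1 + \<alpha> \<noteq> 0" and a2: "1 - \<alpha> \<noteq> 0"
  proof -
    show "\<alpha> \<noteq> 0" using a by auto
    have "1 - \<alpha>^2 = (1 + \<alpha>) * (1 - \<alpha>)" by algebra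
    then show "1 + \<alpha> \<noteq> 0" "1 - \<alpha> \<noteq> 0" using a by auto
  qed
  note H' = H[unfolded v]
  from q consider "q \<in> Z0" | "q \<in> Z1 \<alpha>" | "q \<in> Z2 \<alpha>" | "q \<in> Z3" | "q \<in> Z4 \<alpha>" by blast
  then show "\<exists>c. v = (\<lambda>i. c * q i)"
  proof cases
    case 1
    then have "q = pt 1 0 0 0 \<or> q = pt 0 1 0 0 \<or> q = pt 0 0 1 0 \<or> q = pt 0 0 0 1" unfolding Z0_def by blast
    then show ?thesis using mo_Z0[OF a0 two] H' unfolding v by blast
  next
    case 2
    then obtain l1 l3 where qq: "q = pt l1 1 l3 1" and h: "l1^2 = - 2 * (1 + \<alpha>)" "l3^2 = 2"
      unfolding Z1_def by blast
    show ?thesis unfolding v qq using mo_Z1[OF two a1 h H'[unfolded qq]] by blast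
  next
    case 3
    then obtain l1 l3 where qq: "q = pt l1 (-1) l3 1" and h: "l1^2 = - 2 * (1 - \<alpha>)" "l3^2 = - 2"
      unfolding Z2_def by blast
    show ?thesis unfolding v qq using mo_Z2[OF two a2 h H'[unfolded qq]] by blast
  next
    case 4
    then obtain l1 l2 where qq: "q = pt l1 l2 0 1" and h: "l1^2 = - 2" "l2^2 = - 1"
      unfolding Z3_def by blast
    show ?thesis unfolding v qq using mo_Z3[OF two h H'[unfolded qq]] by blast
  next
    case 5
    then obtain l2 l3 where qq: "q = pt 0 l2 l3 1" and h: "\<alpha> * l2^2 + 2 * l2 + \<alpha> = 0" "\<alpha> * l3^2 = - 2 * l2^2"
      unfolding Z4_def by blast
    show ?thesis unfolding v qq using mo_Z4[OF two a h H'[unfolded qq]] by blast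
  qed
qed

lemma mult_one_all:
  assumes two: "(2::'a::field) \<noteq> 0" and a: "(\<alpha>::'a) * (1 - \<alpha>^2) \<noteq> 0"
    and p: "p \<in> plocus \<alpha>"
  shows "mult_one \<alpha> p"
proof -
  have a0: "\<alpha> \<noteq> 0" using a by auto
  obtain k q where k: "k \<noteq> 0" and q: "q \<in> Z0 \<union> Z1 \<alpha> \<union> Z2 \<alpha> \<union> Z3 \<union> Z4 \<alpha>" and pk: "p = (\<lambda>i. k * q i)"
    using classify[OF p a0 two] by blast
  have mq: "mult_one \<alpha> q" by (rule mult_one_Z[OF two a q])
  show ?thesis unfolding mult_one_def
  proof (intro ballI impI)
    fix v assume v: "v \<in> vecs4" and H: "\<forall>R\<in>row_sets. dminor \<alpha> p v R = 0"
    have "\<forall>R\<in>row_sets. dminor \<alpha> q v R = 0"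
      by (rule dminor_scale_all[OF H[unfolded pk] k])
    with mq v obtain c where "v = (\<lambda>i. c * q i)" unfolding mult_one_def by blast
    then have "v = (\<lambda>i. (c / k) * p i)" unfolding pk using k by auto
    then show "\<exists>c. v = (\<lambda>i. c * p i)" by blast
  qed
qed

theorem proposition2p2:
  fixes \<alpha> :: "'a::field"
  assumes alg_closed: "\<forall>q :: 'a poly. degree q \<noteq> 0 \<longrightarrow> (\<exists>x. poly q x = 0)"
    and char_not_2: "(2::'a) \<noteq> 0"
    and alpha: "\<alpha> * (1 - \<alpha>^2) \<noteq> 0"
  shows "proj ` plocus \<alpha> = proj ` (Z0 \<union> Z1 \<alpha> \<union> Z2 \<alpha> \<union> Z3 \<union> Z4 \<alpha>)
         \<and> card (proj ` plocus \<alpha>) = 20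
         \<and> (\<forall>p \<in> plocus \<alpha>. mult_one \<alpha> p)"
proof -
  have a0: "\<alpha> \<noteq> 0" using alpha by auto
  have P1: "proj ` plocus \<alpha> = proj ` (Z0 \<union> Z1 \<alpha> \<union> Z2 \<alpha> \<union> Z3 \<union> Z4 \<alpha>)"
    by (rule part1[OF a0 char_not_2])
  show ?thesis
    using P1 part2[OF alg_closed char_not_2 alpha] mult_one_all[OF char_not_2 alpha] by simp
qed

end
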